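(* Let $n,m,c\ge 1$, let $P=(V_P,E_P)$ be a graph, let $S\subseteq V_P$, and let $\phi: V_P\to\mathcal P(V(T(n,m,c)))$ be a feasible embedding of $P[S]$ into the Chimera graph $T(n,m,c)$. Define $\phi^\dagger: V_P\to\mathcal P(V(T(2n,2m,c)))$ by $$\phi^\dagger(v)=\bigcup_{(x,y,z)\in\phi(v)} \sigma(x,y,z),$$ where $\sigma(x,y,z)=\{(2x,2y,z),(2x+1,2y,z)\}$ if $0\le z\le c-1$, and $\sigma(x,y,z)=\{(2x,2y,z),(2x,2y+1,z)\}$ if $c\le z\le 2c-1$. Then $\phi^\dagger$ is a feasible embedding of $P[S]$ into $T(2n,2m,c)$.
   Context: Chimera graph $T(n,m,c)$: an $n\times m$ grid of unit cells, each a complete bipartite graph $K_{c,c}$. Its vertices are triples $(x,y,z)$ with $x\in\{0,\dots,n-1\}$ (row index), $y\in\{0,\dots,m-1\}$ (column index), $z\in\{0,\dots,2c-1\}$; vertices with $z\le c-1$ form the left partite set and those with $z\ge c$ the right partite set of cell $(x,y)$. Edges: $(x,y,z)\sim(x,y,z')$ whenever $z\le c-1<z'$ (the $K_{c,c}$ inside a cell); $(x,y,z)\sim(x+1,y,z)$ for $z\le c-1$ and $x+1\le n-1$ (left-partite vertices connect to the corresponding vertex in the adjacent cell of the same column); $(x,y,z)\sim(x,y+1,z)$ for $z\ge c$ and $y+1\le m-1$ (right-partite vertices connect to the corresponding vertex in the adjacent cell of the same row). For $S\subseteq V_P$, $P[S]$ is the subgraph of $P$ induced on $S$. A map $\phi: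 V_P\to\mathcal P(V_H)$ into a hardware graph $H$ is a feasible embedding of $P[S]$ into $H$ if: $\phi(v)=\emptyset$ for $v\notin S$ and $\phi(v)\neq\emptyset$ for $v\in S$; the sets (chains) $\phi(v)$, $v\in V_P$, are pairwise disjoint; each chain $\phi(v)$ induces a connected subgraph of $H$; and for every edge $(u,v)\in E_P$ with $u,v\in S$ there exist $a\in\phi(u)$, $b\in\phi(v)$ with $(a,b)$ an edge of $H$. *)

theory Defs
  imports Main
begin

type_synonym cvert = "nat \<times> nat \<times> nat"

definition chimera_verts :: "nat \<Rightarrow> nat \<Rightarrow> nat \<Rightarrow> cvert set" where
  "chimera_verts n m c = {(x,y,z). x < n \<and> y < m \<and> z < 2*c}"

definition chimera_edge0 :: "nat \<Rightarrow> nat \<Rightarrow> nat \<Rightarrow> cvert \<Rightarrow> cvert \<Rightarrow> bool" where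
  "chimera_edge0 n m c a b \<longleftrightarrow> a \<in> chimera_verts n m c \<and> b \<in> chimera_verts n m c \<and>
     (case a of (x,y,z) \<Rightarrow> case b of (x',y',z') \<Rightarrow>
        (x' = x \<and> y' = y \<and> z \<le> c - 1 \<and> c - 1 < z')
      \<or> (x' = x + 1 \<and> y' = y \<and> z' = z \<and> z \<le> c - 1)
      \<or> (x' = x \<and> y' = y + 1 \<and> z' = z \<and> z \<ge> c))"

definition chimera_adj :: "nat \<Rightarrow> nat \<Rightarrow> nat \<Rightarrow> cvert \<Rightarrow> cvert \<Rightarrow> bool" where
  "chimera_adj n m c a b \<longleftrightarrow> chimera_edge0 n m c a b \<or> chimera_edge0 n m c b a"

definition induces_connected :: "('a \<Rightarrow> 'a \<Rightarrow> bool) \<Rightarrow> 'a set \<Rightarrow> bool" where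
  "induces_connected H C \<longleftrightarrow>
     (\<forall>a\<in>C. \<forall>b\<in>C. (\<lambda>u w. u \<in> C \<and> w \<in> C \<and> H u w)\<^sup>*\<^sup>* a b)"

definition feasible_embedding ::
  "'v set \<Rightarrow> ('v \<times> 'v) set \<Rightarrow> 'v set \<Rightarrow> 'h set \<Rightarrow> ('h \<Rightarrow> 'h \<Rightarrow> bool) \<Rightarrow> ('v \<Rightarrow> 'h set) \<Rightarrow> bool" where
  "feasible_embedding VP EP S VH H \<phi> \<longleftrightarrow>
     (\<forall>v\<in>VP. \<phi> v \<subseteq> VH) \<and>
     (\<forall>v\<in>VP. v \<notin> S \<longrightarrow> \<phi> v = {}) \<and>
     (\<forall>v\<in>S. \<phi> v \<noteq> {}) \<and>
     (\<forall>u\<in>VP. \<forall>v\<in>VP. u \<noteq> v \<longrightarrow> \<phi> u \<inter> \<phi> v = {}) \<and>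
     (\<forall>v\<in>VP. induces_connected H (\<phi> v)) \<and>
     (\<forall>(u,v)\<in>EP. u \<in> S \<longrightarrow> v \<in> S \<longrightarrow> (\<exists>a\<in>\<phi> u. \<exists>b\<in>\<phi> v. H a b))"

definition sigma :: "nat \<Rightarrow> cvert \<Rightarrow> cvert set" where
  "sigma c p = (case p of (x,y,z) \<Rightarrow>
     if z \<le> c - 1 then {(2*x, 2*y, z), (2*x+1, 2*y, z)}
     else {(2*x, 2*y, z), (2*x, 2*y+1, z)})"

definition phi_dagger :: "nat \<Rightarrow> ('v \<Rightarrow> cvert set) \<Rightarrow> 'v \<Rightarrow> cvert set" where
  "phi_dagger c \<phi> v = (\<Union>p\<in>\<phi> v. sigma c p)"

end

theory Submission
  imports Defs
begin

lemma lift_conn: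
  assumes ic: "induces_connected H C"
    and w: "\<forall>p\<in>C. \<forall>\<alpha>\<in>f p. \<forall>\<beta>\<in>f p. \<alpha> = \<beta> \<or> H' \<alpha> \<beta>"
    and e: "\<forall>a\<in>C. \<forall>b\<in>C. H a b \<longrightarrow> (\<exists>\<alpha>\<in>f a. \<exists>\<beta>\<in>f b. H' \<alpha> \<beta>)"
  shows "induces_connected H' (\<Union>p\<in>C. f p)"
proof -
  let ?D = "\<Union>p\<in>C. f p"
  let ?R = "\<lambda>u w. u \<in> C \<and> w \<in> C \<and> H u w"
  let ?R' = "\<lambda>u w. u \<in> ?D \<and> w \<in> ?D \<and> H' u w"
  have within: "?R'\<^sup>*\<^sup>* \<alpha> \<beta>" if "p \<in> C" "\<alpha> \<in> f p" "\<beta> \<in> f p" for p \<alpha> \<beta>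
  proof -
    from w that have "\<alpha> = \<beta> \<or> H' \<alpha> \<beta>" by blast
    then show ?thesis
    proof
      assume "H' \<alpha> \<beta>" then have "?R' \<alpha> \<beta>" using that by blast
      then show ?thesis by (rule r_into_rtranclp)
    qed simp
  qed
  have main: "?R\<^sup>*\<^sup>* a b \<Longrightarrow> a \<in> C \<Longrightarrow> \<forall>\<alpha>\<in>f a. \<forall>\<beta>\<in>f b. ?R'\<^sup>*\<^sup>* \<alpha> \<beta>" for a b
  proof (induction rule: rtranclp_induct)
    case base
    then show ?case using within[of a] by simp
  next
    case (step b d)
    show ?case
    proof (intro ballI)
      fix \<alpha> \<gamma> assume a: "\<alpha> \<in> f a" and g: "\<gamma> \<in> f d"
      from step(2) have bC: "b \<in> C" and dC: "d \<in> C" and hbd: "H b d" by simp_all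
      from e bC dC hbd obtain \<beta>1 \<gamma>1 where b1: "\<beta>1 \<in> f b" and g1: "\<gamma>1 \<in> f d" and h: "H' \<beta>1 \<gamma>1"
        by blast
      have 1: "?R'\<^sup>*\<^sup>* \<alpha> \<beta>1" using step.IH[OF step.prems] a b1 by simp
      have 2: "?R' \<beta>1 \<gamma>1" using b1 g1 h bC dC by (simp; blast)
      have 3: "?R'\<^sup>*\<^sup>* \<gamma>1 \<gamma>" using within[OF dC g1 g] .
      show "?R'\<^sup>*\<^sup>* \<alpha> \<gamma>"
        using rtranclp_trans[OF rtranclp.rtrancl_into_rtrancl[OF 1 2] 3] .
    qed
  qed
  show ?thesis unfolding induces_connected_def
  proof (intro ballI)
    fix \<alpha> \<beta> assume "\<alpha> \<in> ?D" "\<beta> \<in> ?D"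
    then obtain a b where ab: "a \<in> C" "\<alpha> \<in> f a" "b \<in> C" "\<beta> \<in> f b" by blast
    have "?R\<^sup>*\<^sup>* a b" using ic ab(1,3) unfolding induces_connected_def by simp
    from main[OF this ab(1)] ab(2,4) show "?R'\<^sup>*\<^sup>* \<alpha> \<beta>" by simp
  qed
qed

lemma sigma_verts:
  assumes "c \<ge> 1" "p \<in> chimera_verts n m c"
  shows "sigma c p \<subseteq> chimera_verts (2*n) (2*m) c"
  using assms by (cases p) (auto simp: sigma_def chimera_verts_def)

lemma sigma_ne: "sigma c p \<noteq> {}"
  by (cases p) (auto simp: sigma_def)

lemma sigma_disj:
  assumes "q \<in> sigma c p" "q \<in> sigma c p'"
  shows "p = p'"
  using assms by (cases p; cases p') (auto simp: sigma_def split: if_splits)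

lemma sigma_within:
  assumes "c \<ge> 1" "p \<in> chimera_verts n m c" "\<alpha> \<in> sigma c p" "\<beta> \<in> sigma c p"
  shows "\<alpha> = \<beta> \<or> chimera_adj (2*n) (2*m) c \<alpha> \<beta>"
proof -
  obtain x y z where p: "p = (x,y,z)" by (cases p)
  from assms(2) have v: "x < n" "y < m" "z < 2*c" by (simp_all add: p chimera_verts_def)
  have sym: "chimera_adj (2*n) (2*m) c u w \<Longrightarrow> chimera_adj (2*n) (2*m) c w u" for u w
    unfolding chimera_adj_def by blast
  show ?thesis
  proof (cases "z \<le> c - 1")
    case True
    have ab: "\<alpha> \<in> {(2*x, 2*y, z), (2*x+1, 2*y, z)}" "\<beta> \<in> {(2*x, 2*y, z), (2*x+1, 2*y, z)}"
      using assms(3,4) True by (simp_all add: sigma_def p)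
    have e: "chimera_adj (2*n) (2*m) c (2*x, 2*y, z) (2*x+1, 2*y, z)"
      unfolding chimera_adj_def chimera_edge0_def chimera_verts_def using v True by simp
    show ?thesis using ab e sym[OF e] by auto
  next
    case False
    have ab: "\<alpha> \<in> {(2*x, 2*y, z), (2*x, 2*y+1, z)}" "\<beta> \<in> {(2*x, 2*y, z), (2*x, 2*y+1, z)}"
      using assms(3,4) False by (simp_all add: sigma_def p)
    have e: "chimera_adj (2*n) (2*m) c (2*x, 2*y, z) (2*x, 2*y+1, z)"
      unfolding chimera_adj_def chimera_edge0_def chimera_verts_def using v False by simp
    show ?thesis using ab e sym[OF e] by auto
  qed
qed

lemma sigma_edge0:
  assumes "c \<ge> 1" "chimera_edge0 n m c a b"
  shows "\<exists>\<alpha>\<in>sigma c a. \<exists>\<beta>\<in>sigma c b. chimera_adj (2*n) (2*m) c \<alpha> \<beta>"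
proof -
  obtain x y z x' y' z' where ab: "a = (x,y,z)" "b = (x',y',z')" by (cases a; cases b) auto
  from assms show ?thesis unfolding ab
    apply (simp add: chimera_edge0_def chimera_verts_def)
    apply (elim conjE disjE)
    subgoal by (rule bexI[of _ "(2*x,2*y,z)"], rule bexI[of _ "(2*x,2*y,z')"])
                  (auto simp: sigma_def chimera_adj_def chimera_edge0_def chimera_verts_def)
    subgoal by (rule bexI[of _ "(2*x+1,2*y,z)"], rule bexI[of _ "(2*x',2*y,z)"])
                  (auto simp: sigma_def chimera_adj_def chimera_edge0_def chimera_verts_def)
    subgoal by (rule bexI[of _ "(2*x,2*y+1,z)"], rule bexI[of _ "(2*x,2*y',z)"])
                  (auto simp: sigma_def chimera_adj_def chimera_edge0_def chimera_verts_def)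
    done
qed

lemma sigma_edge:
  assumes "c \<ge> 1" "chimera_adj n m c a b"
  shows "\<exists>\<alpha>\<in>sigma c a. \<exists>\<beta>\<in>sigma c b. chimera_adj (2*n) (2*m) c \<alpha> \<beta>"
proof -
  have "chimera_edge0 n m c a b \<or> chimera_edge0 n m c b a" using assms(2) unfolding chimera_adj_def .
  then show ?thesis
proof
  assume "chimera_edge0 n m c a b" then show ?thesis using sigma_edge0 assms(1) by blast
next
  assume "chimera_edge0 n m c b a"
  then obtain \<alpha> \<beta> where "\<alpha>\<in>sigma c b" "\<beta>\<in>sigma c a" "chimera_adj (2*n) (2*m) c \<alpha> \<beta>"
    using sigma_edge0 assms(1) by blast
  then show ?thesis unfolding chimera_adj_def by blast
qed
qed

theorem mainTheorem1:
  fixes n m c :: nat and VP :: "'v set" and EP :: "('v \<times> 'v) set" and S :: "'v set"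
    and \<phi> :: "'v \<Rightarrow> cvert set"
  assumes "n \<ge> 1" and "m \<ge> 1" and "c \<ge> 1"
    and "EP \<subseteq> VP \<times> VP"
    and "S \<subseteq> VP"
    and "feasible_embedding VP EP S (chimera_verts n m c) (chimera_adj n m c) \<phi>"
  shows "feasible_embedding VP EP S (chimera_verts (2*n) (2*m) c) (chimera_adj (2*n) (2*m) c)
           (phi_dagger c \<phi>)"
proof -
  note F = assms(6)[unfolded feasible_embedding_def]
  have F1: "\<forall>v\<in>VP. \<phi> v \<subseteq> chimera_verts n m c" using F by (rule conjunct1)
  have F2: "\<forall>v\<in>VP. v \<notin> S \<longrightarrow> \<phi> v = {}" using F[THEN conjunct2] by (rule conjunct1)
  have F3: "\<forall>v\<in>S. \<phi> v \<noteq> {}" using F[THEN conjunct2, THEN conjunct2] by (rule conjunct1)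
  have F4: "\<forall>u\<in>VP. \<forall>v\<in>VP. u \<noteq> v \<longrightarrow> \<phi> u \<inter> \<phi> v = {}"
    using F[THEN conjunct2, THEN conjunct2, THEN conjunct2] by (rule conjunct1)
  have F5: "\<forall>v\<in>VP. induces_connected (chimera_adj n m c) (\<phi> v)"
    using F[THEN conjunct2, THEN conjunct2, THEN conjunct2, THEN conjunct2] by (rule conjunct1)
  have F6: "\<forall>(u,v)\<in>EP. u \<in> S \<longrightarrow> v \<in> S \<longrightarrow> (\<exists>a\<in>\<phi> u. \<exists>b\<in>\<phi> v. chimera_adj n m c a b)"
    using F[THEN conjunct2, THEN conjunct2, THEN conjunct2, THEN conjunct2] by (rule conjunct2)
  have 1: "\<forall>v\<in>VP. phi_dagger c \<phi> v \<subseteq> chimera_verts (2*n) (2*m) c"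
    unfolding phi_dagger_def
  proof (intro ballI UN_least)
    fix v p assume v: "v \<in> VP" and p: "p \<in> \<phi> v"
    have "p \<in> chimera_verts n m c" using F1 v p by blast
    then show "sigma c p \<subseteq> chimera_verts (2*n) (2*m) c" by (rule sigma_verts[OF assms(3)])
  qed
  have 2: "\<forall>v\<in>VP. v \<notin> S \<longrightarrow> phi_dagger c \<phi> v = {}"
    using F2 unfolding phi_dagger_def by simp
  have 3: "\<forall>v\<in>S. phi_dagger c \<phi> v \<noteq> {}"
    unfolding phi_dagger_def
  proof
    fix v assume "v \<in> S"
    with F3 obtain p where "p \<in> \<phi> v" by blast
    then show "(\<Union>p\<in>\<phi> v. sigma c p) \<noteq> {}" using sigma_ne[of c p] by blast
  qed
  have 4: "\<forall>u\<in>VP. \<forall>v\<in>VP. u \<noteq> v \<longrightarrow> phi_dagger c \<phi> u \<inter> phi_dagger c \<phi> v = {}"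
  proof (intro ballI impI)
    fix u v assume "u \<in> VP" "v \<in> VP" "u \<noteq> v"
    with F4 have d: "\<phi> u \<inter> \<phi> v = {}" by blast
    show "phi_dagger c \<phi> u \<inter> phi_dagger c \<phi> v = {}"
    proof (rule ccontr)
      assume "phi_dagger c \<phi> u \<inter> phi_dagger c \<phi> v \<noteq> {}"
      then obtain q p p' where "p \<in> \<phi> u" "q \<in> sigma c p" "p' \<in> \<phi> v" "q \<in> sigma c p'"
        unfolding phi_dagger_def by blast
      moreover then have "p = p'" by (intro sigma_disj)
      ultimately show False using d by blast
    qed
  qed
  have 5: "\<forall>v\<in>VP. induces_connected (chimera_adj (2*n) (2*m) c) (phi_dagger c \<phi> v)"
  proof
    fix v assume v: "v \<in> VP"
    show "induces_connected (chimera_adj (2*n) (2*m) c) (phi_dagger c \<phi> v)"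
      unfolding phi_dagger_def
    proof (rule lift_conn[where H="chimera_adj n m c"])
      show "induces_connected (chimera_adj n m c) (\<phi> v)" using F5 v by blast
      show "\<forall>p\<in>\<phi> v. \<forall>\<alpha>\<in>sigma c p. \<forall>\<beta>\<in>sigma c p. \<alpha> = \<beta> \<or> chimera_adj (2 * n) (2 * m) c \<alpha> \<beta>"
      proof (intro ballI)
        fix p \<alpha> \<beta> assume "p \<in> \<phi> v" "\<alpha> \<in> sigma c p" "\<beta> \<in> sigma c p"
        moreover have "p \<in> chimera_verts n m c" using F1 v \<open>p \<in> \<phi> v\<close> by blast
        ultimately show "\<alpha> = \<beta> \<or> chimera_adj (2 * n) (2 * m) c \<alpha> \<beta>"
          using sigma_within[OF assms(3)] by blast
      qed
      show "\<forall>a\<in>\<phi> v. \<forall>b\<in>\<phi> v. chimera_adj n m c a b \<longrightarrow>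
          (\<exists>\<alpha>\<in>sigma c a. \<exists>\<beta>\<in>sigma c b. chimera_adj (2 * n) (2 * m) c \<alpha> \<beta>)"
        using sigma_edge[OF assms(3)] by blast
    qed
  qed
  have 6: "\<forall>(u,v)\<in>EP. u \<in> S \<longrightarrow> v \<in> S \<longrightarrow>
      (\<exists>a\<in>phi_dagger c \<phi> u. \<exists>b\<in>phi_dagger c \<phi> v. chimera_adj (2*n) (2*m) c a b)"
  proof (intro ballI impI, clarify)
    fix u v assume "(u,v) \<in> EP" "u \<in> S" "v \<in> S"
    with F6 obtain a b where ab: "a \<in> \<phi> u" "b \<in> \<phi> v" "chimera_adj n m c a b" by blast
    from sigma_edge[OF assms(3) ab(3)] obtain \<alpha> \<beta> where
      "\<alpha> \<in> sigma c a" "\<beta> \<in> sigma c b" "chimera_adj (2*n) (2*m) c \<alpha> \<beta>" by blast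
    with ab show
      "\<exists>a\<in>phi_dagger c \<phi> u. \<exists>b\<in>phi_dagger c \<phi> v. chimera_adj (2*n) (2*m) c a b"
      unfolding phi_dagger_def by blast
  qed
  show ?thesis unfolding feasible_embedding_def by (intro conjI 1 2 3 4 5 6)
qed

end
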